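(* Let $R,S$ be finite nonempty sets, $k$ a positive integer, $p_r>0$ ($r\in R$), $T=\sum_{r\in R}p_r$, $d_{r,s}\ge0$, and $\kappa<0$. Let $F$ be the set of $(\mathbf x,\mathbf y)$ with $x_s,y_{r,s}\in\{0,1\}$, $\sum_{s\in S}x_s=k$, $y_{r,s}\le x_s$, and $\sum_{s\in S}y_{r,s}=1$ for all $r$. For $\mathbf y$ let $\overline{\mathcal K}(\mathbf y)=\sum_{r,s}p_ry_{r,s}e^{-\kappa d_{r,s}}$ and $\mathcal K(\mathbf y)=-\frac1\kappa\ln\left(\frac1T\overline{\mathcal K}(\mathbf y)\right)$. Let $U\subseteq S$, $c_s\ge0$ for $s\in U$, $\sigma(\mathbf x)=\sum_{s\in U}c_sx_s$. Let $(\mathbf x^{all},\mathbf y^{all})$ be an optimal solution of $\min\{\overline{\mathcal K}(\mathbf y):(\mathbf x,\mathbf y)\in F\}$, and set $\mathcal K^{all}=\mathcal K(\mathbf y^{all})$ and $\sigma^{all}=\sigma(\mathbf x^{all})$. Set $\hat{\mathcal K}=\mathcal K^{all}$ and let $(\mathbf x^*,\mathbf y^*,v^*,q^* )$ be optimal for \[ \text{(KPL}^p)\quad \min\ \overline{\mathcal K}(\mathbf y)+Te^{-\kappa\hat{\mathcal K}}(v-1)\ \text{ s.t. } (\mathbf x,\mathbf y)\in F,\ v\ge e^{q},\ q=-\kappa\,\sigma(\mathbf x). \] Let $\sigma^*=\sigma(\mathbf x^* )$, $\mathcal K^*=\mathcal K(\mathbf y^* )$, $\Delta=\hat{\mathcal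 K}-\mathcal K^*$, and define $\hat\sigma$ by \[ \mathcal K^*+\hat\sigma=-\frac1\kappa\ln\left(\frac1T\left(\overline{\mathcal K}(\mathbf y^* )+Te^{-\kappa\hat{\mathcal K}}\left(e^{-\kappa\sigma^*}-1\right)\right)\right). \] Then the penalized locations are under-penalized, i.e. $\hat\sigma\le\sigma^*$, and \[ \sigma^*-\hat\sigma\le|\Delta|\left(1-e^{\kappa\sigma^*}\right)\le\sigma^{all}\left(1-e^{\kappa\sigma^*}\right)\le\sigma^{all}\left(1-e^{\kappa\sigma^{all}}\right). \]
   Context: $U$ is a set of less desirable potential locations, $c_s$ is the penalty (in distance units) for selecting $s\in U$; $\hat\sigma$ is the penalty actually applied to the optimal Kolm–Pollak score by (KPL$^p$), whose parameter $\hat{\mathcal K}$ approximates the optimal unpenalized Kolm–Pollak score $\mathcal K^*$. *)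

theory Defs
  imports Complex_Main
begin

definition feas :: "'r set \<Rightarrow> 's set \<Rightarrow> nat \<Rightarrow> (('s \<Rightarrow> real) \<times> ('r \<Rightarrow> 's \<Rightarrow> real)) set" where
  "feas R S k = {(x, y).
      (\<forall>s\<in>S. x s \<in> {0, 1}) \<and>
      (\<forall>r\<in>R. \<forall>s\<in>S. y r s \<in> {0, 1}) \<and>
      (\<Sum>s\<in>S. x s) = real k \<and>
      (\<forall>r\<in>R. \<forall>s\<in>S. y r s \<le> x s) \<and>
      (\<forall>r\<in>R. (\<Sum>s\<in>S. y r s) = 1)}"

definition Kbar :: "'r set \<Rightarrow> 's set \<Rightarrow> ('r \<Rightarrow> real) \<Rightarrow> ('r \<Rightarrow> 's \<Rightarrow> real) \<Rightarrow> real
    \<Rightarrow> ('r \<Rightarrow> 's \<Rightarrow> real) \<Rightarrow> real" where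
  "Kbar R S p d \<kappa> y = (\<Sum>r\<in>R. \<Sum>s\<in>S. p r * y r s * exp (- \<kappa> * d r s))"

definition KP :: "'r set \<Rightarrow> 's set \<Rightarrow> ('r \<Rightarrow> real) \<Rightarrow> ('r \<Rightarrow> 's \<Rightarrow> real) \<Rightarrow> real
    \<Rightarrow> ('r \<Rightarrow> 's \<Rightarrow> real) \<Rightarrow> real" where
  "KP R S p d \<kappa> y = - (1 / \<kappa>) * ln ((1 / (\<Sum>r\<in>R. p r)) * Kbar R S p d \<kappa> y)"

definition pen :: "'s set \<Rightarrow> ('s \<Rightarrow> real) \<Rightarrow> ('s \<Rightarrow> real) \<Rightarrow> real" where
  "pen U c x = (\<Sum>s\<in>U. c s * x s)"

end

theory Submission
  imports Defs "HOL-Analysis.Analysis"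
begin

lemma ln_mix: fixes w u :: real assumes "0 \<le> w" "w \<le> 1" "u > 0"
  shows "w * ln u \<le> ln (w * u + (1 - w))"
proof -
  have "w * ln u + (1 - w) * ln 1 \<le> ln (w * u + (1 - w) * 1)"
    using ln_concave[unfolded concave_on_iff, THEN conjunct2, rule_format, where x=u and y=1 and u=w and v="1 - w"] assms by simp
  then show ?thesis by simp
qed

lemma Kbar_pos:
  assumes "finite R" "R \<noteq> {}" "finite S" "\<forall>r\<in>R. p r > 0" "(x, y) \<in> feas R S k"
  shows "Kbar R S p d \<kappa> y > 0"
proof -
  have pos: "(\<Sum>s\<in>S. p r * y r s * exp (- \<kappa> * d r s)) > 0" if r: "r \<in> R" for r
  proof -
    have y01: "\<forall>s\<in>S. y r s \<in> {0,1}" and ys: "(\<Sum>s\<in>S. y r s) = 1"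
      using assms(5) r unfolding feas_def by auto
    obtain s where s: "s \<in> S" "y r s \<noteq> 0"
      using ys by (metis sum.neutral zero_neq_one)
    then have "y r s = 1" using y01 by auto
    have "(\<Sum>s\<in>S. p r * y r s * exp (- \<kappa> * d r s)) \<ge> p r * y r s * exp (- \<kappa> * d r s)"
      by (rule member_le_sum) (use s y01 r assms(3,4) in \<open>auto intro!: mult_nonneg_nonneg\<close>)
    moreover have "p r * y r s * exp (- \<kappa> * d r s) > 0" using \<open>y r s = 1\<close> r assms(4) by simp
    ultimately show ?thesis by linarith
  qed
  show ?thesis unfolding Kbar_def
    by (rule sum_pos) (use assms pos in auto)
qed

lemma pen_nonneg:
  assumes "finite S" "U \<subseteq> S" "\<forall>s\<in>U. c s \<ge> 0" "(x, y) \<in> feas R S k"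
  shows "pen U c x \<ge> 0"
proof -
  have "\<forall>s\<in>S. x s \<in> {0,1}" using assms(4) unfolding feas_def by auto
  then have "\<forall>s\<in>U. x s \<ge> 0" using assms(2) by fastforce
  then show ?thesis unfolding pen_def using assms(3)
    by (intro sum_nonneg) simp
qed

theorem theorem4:
  fixes R :: "'r set" and S :: "'s set" and k :: nat
    and p :: "'r \<Rightarrow> real" and d :: "'r \<Rightarrow> 's \<Rightarrow> real" and \<kappa> :: real
    and U :: "'s set" and c :: "'s \<Rightarrow> real"
    and xall :: "'s \<Rightarrow> real" and yall :: "'r \<Rightarrow> 's \<Rightarrow> real"
    and xs :: "'s \<Rightarrow> real" and ys :: "'r \<Rightarrow> 's \<Rightarrow> real" and vs qs :: real
  assumes "finite R" "R \<noteq> {}" "finite S" "S \<noteq> {}" "k > 0"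
    and "\<forall>r\<in>R. p r > 0"
    and "\<forall>r\<in>R. \<forall>s\<in>S. d r s \<ge> 0"
    and "\<kappa> < 0"
    and "U \<subseteq> S" "\<forall>s\<in>U. c s \<ge> 0"
    and all_feas: "(xall, yall) \<in> feas R S k"
    and all_opt: "\<forall>(x, y)\<in>feas R S k. Kbar R S p d \<kappa> yall \<le> Kbar R S p d \<kappa> y"
    and star_feas: "(xs, ys) \<in> feas R S k" "vs \<ge> exp qs" "qs = - \<kappa> * pen U c xs"
    and star_opt: "\<forall>x y v q. (x, y) \<in> feas R S k \<and> v \<ge> exp q \<and> q = - \<kappa> * pen U c x \<longrightarrow>
        Kbar R S p d \<kappa> ys + (\<Sum>r\<in>R. p r) * exp (- \<kappa> * KP R S p d \<kappa> yall) * (vs - 1)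
        \<le> Kbar R S p d \<kappa> y + (\<Sum>r\<in>R. p r) * exp (- \<kappa> * KP R S p d \<kappa> yall) * (v - 1)"
  shows
    "let T = (\<Sum>r\<in>R. p r);
         Kall = KP R S p d \<kappa> yall; \<sigma>all = pen U c xall;
         Khat = Kall;
         \<sigma>s = pen U c xs; Ks = KP R S p d \<kappa> ys; \<Delta> = Khat - Ks;
         \<sigma>hat = - (1 / \<kappa>) * ln ((1 / T) * (Kbar R S p d \<kappa> ys
                   + T * exp (- \<kappa> * Khat) * (exp (- \<kappa> * \<sigma>s) - 1))) - Ks
     in \<sigma>hat \<le> \<sigma>s
        \<and> \<sigma>s - \<sigma>hat \<le> \<bar>\<Delta>\<bar> * (1 - exp (\<kappa> * \<sigma>s))
        \<and> \<bar>\<Delta>\<bar> * (1 - exp (\<kappa> * \<sigma>s)) \<le> \<sigma>all * (1 - exp (\<kappa> * \<sigma>s))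
        \<and> \<sigma>all * (1 - exp (\<kappa> * \<sigma>s)) \<le> \<sigma>all * (1 - exp (\<kappa> * \<sigma>all))"
proof -
  define T where "T = (\<Sum>r\<in>R. p r)"
  define a where "a = - \<kappa>"
  define KA where "KA = Kbar R S p d \<kappa> yall"
  define KS where "KS = Kbar R S p d \<kappa> ys"
  define Kall where "Kall = KP R S p d \<kappa> yall"
  define Ks where "Ks = KP R S p d \<kappa> ys"
  define \<sigma>all where "\<sigma>all = pen U c xall"
  define \<sigma>s where "\<sigma>s = pen U c xs"
  have a: "a > 0" using assms(8) a_def by simp
  have T: "T > 0" unfolding T_def using assms(1,2,6) by (intro sum_pos) auto
  have KA: "KA > 0" unfolding KA_def using Kbar_pos assms(1,2,3,6) all_feas by blast
  have KS: "KS > 0" unfolding KS_def using Kbar_pos assms(1,2,3,6) star_feas(1) by blast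
  have KAS: "KA \<le> KS" unfolding KA_def KS_def using all_opt star_feas(1) by auto
  have sa: "\<sigma>all \<ge> 0" unfolding \<sigma>all_def using pen_nonneg assms(3,9,10) all_feas by blast
  have ss: "\<sigma>s \<ge> 0" unfolding \<sigma>s_def using pen_nonneg assms(3,9,10) star_feas(1) by blast
  have lnKall: "a * Kall = ln (KA / T)"
    unfolding Kall_def KP_def KA_def T_def a_def using assms(8) by simp
  have lnKs: "a * Ks = ln (KS / T)"
    unfolding Ks_def KP_def KS_def T_def a_def using assms(8) by simp
  define H where "H = KA / T"
  define A where "A = KS / T"
  define E where "E = exp (a * \<sigma>s)"
  have H: "H > 0" "exp (a * Kall) = H" using KA T lnKall H_def by auto
  have A: "A > 0" "exp (a * Ks) = A" using KS T lnKs A_def by auto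
  have lnA: "ln A = a * Ks" using A(2) by (metis ln_exp)
  have HA: "H \<le> A" using KAS T H_def A_def by (simp add: divide_right_mono)
  have E: "E \<ge> 1" using a ss E_def by simp
  have KallKs: "Kall \<le> Ks" using HA H A a
    by (metis exp_le_cancel_iff mult_le_cancel_left_pos)
  have TH: "T * H = KA" using T H_def by simp
  have opt: "KS + KA * (vs - 1) \<le> KA + KA * (exp (a * \<sigma>all) - 1)"
  proof -
    have e: "(\<Sum>r\<in>R. p r) * exp (- \<kappa> * KP R S p d \<kappa> yall) = KA"
      using H(2) TH unfolding T_def Kall_def a_def by simp
    show ?thesis
      using star_opt[rule_format, where x=xall and y=yall and v="exp (a * \<sigma>all)" and q="a * \<sigma>all"] all_feas
      unfolding e unfolding KS_def KA_def \<sigma>all_def a_def by simp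
  qed
  have vsE: "vs \<ge> E" using star_feas(2,3) unfolding E_def a_def \<sigma>s_def by simp
  have vs1: "KA * (vs - 1) \<ge> 0" using vsE E KA by simp
  have c1: "KS \<le> KA * exp (a * \<sigma>all)" using opt vs1 by (simp add: algebra_simps)
  have c2: "KA * (vs - 1) \<le> KA * (exp (a * \<sigma>all) - 1)" using opt KAS by linarith
  have "vs \<le> exp (a * \<sigma>all)" using c2 KA by simp
  then have "E \<le> exp (a * \<sigma>all)" using vsE by linarith
  then have sss: "\<sigma>s \<le> \<sigma>all" using a unfolding E_def by simp
  have "A \<le> H * exp (a * \<sigma>all)" using c1 T unfolding A_def H_def
    by (simp add: divide_right_mono)
  then have "exp (a * Ks) \<le> exp (a * Kall + a * \<sigma>all)" using A H by (simp add: exp_add)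
  then have "a * Ks \<le> a * (Kall + \<sigma>all)" by (simp add: algebra_simps)
  then have D3: "Ks - Kall \<le> \<sigma>all" using a by simp
  define Z where "Z = (1 / T) * (KS + T * H * (E - 1))"
  have Z: "Z = A + H * (E - 1)" unfolding Z_def A_def using T by (simp add: field_simps)
  have Zpos: "Z > 0" using Z A H E by (smt (verit) mult_nonneg_nonneg)
  define \<sigma>hat where "\<sigma>hat = (1 / a) * ln Z - Ks"
  have "H * (E - 1) \<le> A * (E - 1)" using HA E by (intro mult_right_mono) auto
  then have ZAE: "Z \<le> A * E" using Z by (simp add: algebra_simps)
  have "ln Z \<le> ln (A * E)" using ZAE Zpos by simp
  also have "\<dots> = a * Ks + a * \<sigma>s" using A E_def lnA by (simp add: ln_mult)
  finally have "(1/a) * ln Z \<le> Ks + \<sigma>s" using a by (simp add: field_simps)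
  then have P1: "\<sigma>hat \<le> \<sigma>s" unfolding \<sigma>hat_def by simp
  define w where "w = 1 - 1 / E"
  define t where "t = H / A"
  have "1 / E \<le> 1" "0 \<le> 1 / E" using E by auto
  then have w: "0 \<le> w" "w \<le> 1" using w_def by auto
  have t: "t > 0" using H A t_def by simp
  have "A * E * (w * t + (1 - w)) = A + H * (E - 1)" using E A unfolding w_def t_def
    by (simp add: field_simps)
  then have Zf: "Z = A * E * (w * t + (1 - w))" using Z by simp
  have lnt: "ln t = a * Kall - a * Ks" proof -
    have lnH: "ln H = a * Kall" using H(2) by (metis ln_exp)
    show ?thesis unfolding t_def using H(1) A(1) lnH lnA by (simp add: ln_div)
  qed
  have "ln Z = ln A + ln E + ln (w * t + (1 - w))"
  proof -
    have q: "w * t + (1 - w) > 0"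
    proof (cases "w < 1")
      case True
      then show ?thesis using w t by (simp add: add_nonneg_pos)
    next
      case False
      then show ?thesis using w t by simp
    qed
    have "E > 0" using E by simp
    then show ?thesis unfolding Zf using A q by (simp add: ln_mult)
  qed
  moreover have "ln (w * t + (1 - w)) \<ge> w * ln t" using ln_mix w t by blast
  ultimately have "ln Z \<ge> a * Ks + a * \<sigma>s + w * (a * Kall - a * Ks)"
    using E_def lnt lnA by simp
  then have "(1/a) * ln Z \<ge> Ks + \<sigma>s - w * (Ks - Kall)" using a
    by (simp add: field_simps)
  then have P2: "\<sigma>s - \<sigma>hat \<le> (Ks - Kall) * w" unfolding \<sigma>hat_def by (simp add: algebra_simps)
  have wE: "w = 1 - exp (\<kappa> * \<sigma>s)" unfolding w_def E_def a_def
    by (simp add: exp_minus field_simps)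
  have absD: "\<bar>Kall - Ks\<bar> = Ks - Kall" using KallKs by simp
  have P3: "(Ks - Kall) * w \<le> \<sigma>all * w" using D3 w by (simp add: mult_right_mono)
  have P4: "\<sigma>all * (1 - exp (\<kappa> * \<sigma>s)) \<le> \<sigma>all * (1 - exp (\<kappa> * \<sigma>all))"
    using sss sa assms(8) by (intro mult_left_mono) auto
  have shat: "\<sigma>hat = - (1 / \<kappa>) * ln ((1 / T) * (KS + T * exp (- \<kappa> * Kall) * (exp (- \<kappa> * \<sigma>s) - 1))) - Ks"
    unfolding \<sigma>hat_def Z_def a_def using H(2) E_def a_def by simp
  show ?thesis
    unfolding Let_def
    using P1 P2 P3 P4 absD wE shat
    unfolding T_def[symmetric] Kall_def[symmetric] Ks_def[symmetric] KS_def[symmetric]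
      \<sigma>all_def[symmetric] \<sigma>s_def[symmetric]
    by simp
qed

end
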